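(* Let $X=(x_1,\ldots,x_L,x_1,\ldots,x_L,\ldots)$ be a periodic sequence of positive reals with period $L$. Assume that for every $c\in[0,1]$ the limit $F_X(c):=\lim_{k\to\infty}F_X(k,c)$ exists and that $c\mapsto F_X(c)$ is continuous on $[0,1]$. Then for every $c\in(0,1]$ the limit $\lim_{n\to\infty}S(X,n,\lceil cn\rceil)^{1/\lceil cn\rceil}$ exists and equals $F_X(c)$.
   Context: For a sequence $X$ of positive reals and integers $1\le k\le n$, $S(X,n,k):=\binom{n}{k}^{-1}\sum_{1\le i_1<\cdots<i_k\le n}x_{i_1}\cdots x_{i_k}$. For $k\ge1$ and $c\in(0,1]$ set $F_X(k,c):=S(X,kL,\lceil ckL\rceil)^{1/\lceil ckL\rceil}$, and set $F_X(k,0):=(x_1+\cdots+x_L)/L$. *)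

theory Defs
  imports "HOL-Analysis.Analysis"
begin

definition S :: "(nat \<Rightarrow> real) \<Rightarrow> nat \<Rightarrow> nat \<Rightarrow> real" where
  "S x n k = (\<Sum>I \<in> {I. I \<subseteq> {1..n} \<and> card I = k}. \<Prod>i\<in>I. x i) / real (n choose k)"

definition FXk :: "(nat \<Rightarrow> real) \<Rightarrow> nat \<Rightarrow> nat \<Rightarrow> real \<Rightarrow> real" where
  "FXk x L k c = (if c = 0 then (\<Sum>i=1..L. x i) / real L
     else root (nat \<lceil>c * real (k * L)\<rceil>) (S x (k * L) (nat \<lceil>c * real (k * L)\<rceil>)))"

end

theory Submission
  imports Defs
begin

fun E :: "(nat \<Rightarrow> real) \<Rightarrow> nat \<Rightarrow> nat \<Rightarrow> real" where
  "E x N 0 = 1"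
| "E x 0 (Suc j) = 0"
| "E x (Suc N) (Suc j) = E x N (Suc j) + x (Suc N) * E x N j"

definition T :: "(nat \<Rightarrow> real) \<Rightarrow> nat \<Rightarrow> nat \<Rightarrow> real" where
  "T x N j = (\<Sum>I \<in> {I. I \<subseteq> {1..N} \<and> card I = j}. \<Prod>i\<in>I. x i)"

lemma T_0: "T x N 0 = 1"
proof -
  have "{I. I \<subseteq> {1..N} \<and> card I = 0} = {{}}"
    by (auto dest: finite_subset[OF _ finite_atLeastAtMost])
  thus ?thesis by (simp add: T_def)
qed

lemma T_0S: "T x 0 (Suc j) = 0"
proof -
  have "{I. I \<subseteq> {1..(0::nat)} \<and> card I = Suc j} = {}" by auto
  thus ?thesis by (simp add: T_def)
qed

lemma T_SS: "T x (Suc N) (Suc j) = T x N (Suc j) + x (Suc N) * T x N j"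
proof -
  let ?A = "{I. I \<subseteq> {1..N} \<and> card I = Suc j}"
  let ?B = "{I. I \<subseteq> {1..N} \<and> card I = j}"
  have fin: "finite {I. I \<subseteq> {1..M::nat}}" for M by simp
  have eq: "{I. I \<subseteq> {1..Suc N} \<and> card I = Suc j} = ?A \<union> insert (Suc N) ` ?B"
  proof (rule set_eqI, rule iffI)
    fix I assume "I \<in> {I. I \<subseteq> {1..Suc N} \<and> card I = Suc j}"
    hence I: "I \<subseteq> {1..Suc N}" "card I = Suc j" by auto
    have fI: "finite I" using I(1) finite_subset by blast
    show "I \<in> ?A \<union> insert (Suc N) ` ?B"
    proof (cases "Suc N \<in> I")
      case True
      hence "I = insert (Suc N) (I - {Suc N})" by auto
      moreover have "I - {Suc N} \<in> ?B" using I fI True by auto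
      ultimately show ?thesis by blast
    next
      case False
      have "I \<subseteq> {1..N}"
      proof
        fix i assume "i \<in> I"
        with I(1) False show "i \<in> {1..N}" by (cases "i = Suc N") (auto simp: subset_iff)
      qed
      hence "I \<in> ?A" using I by auto
      thus ?thesis by blast
    qed
  next
    fix I assume "I \<in> ?A \<union> insert (Suc N) ` ?B"
    thus "I \<in> {I. I \<subseteq> {1..Suc N} \<and> card I = Suc j}"
    proof
      assume "I \<in> ?A" thus ?thesis by auto
    next
      assume "I \<in> insert (Suc N) ` ?B"
      then obtain J where J: "J \<subseteq> {1..N}" "card J = j" "I = insert (Suc N) J" by auto
      have "finite J" using J(1) finite_subset by blast
      moreover have "Suc N \<notin> J" using J(1) by auto
      ultimately show ?thesis using J by auto
    qed
  qed
  have fA: "finite ?A" by (rule finite_subset[OF _ fin[of N]]) auto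
  have fB: "finite ?B" by (rule finite_subset[OF _ fin[of N]]) auto
  have disj: "?A \<inter> insert (Suc N) ` ?B = {}" by auto
  have inj: "inj_on (insert (Suc N)) ?B"
  proof (rule inj_onI)
    fix I J assume "I \<in> ?B" "J \<in> ?B" "insert (Suc N) I = insert (Suc N) J"
    moreover have "Suc N \<notin> I" "Suc N \<notin> J" using \<open>I \<in> ?B\<close> \<open>J \<in> ?B\<close> by auto
    ultimately show "I = J" by (metis Diff_insert_absorb)
  qed
  have "T x (Suc N) (Suc j) = (\<Sum>I\<in>?A. \<Prod>i\<in>I. x i) + (\<Sum>I\<in>insert (Suc N) ` ?B. \<Prod>i\<in>I. x i)"
    unfolding T_def eq by (rule sum.union_disjoint) (use fA fB disj in auto)
  also have "(\<Sum>I\<in>insert (Suc N) ` ?B. \<Prod>i\<in>I. x i) = (\<Sum>J\<in>?B. \<Prod>i\<in>insert (Suc N) J. x i)"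
    by (rule sum.reindex[OF inj, unfolded comp_def])
  also have "\<dots> = (\<Sum>J\<in>?B. x (Suc N) * (\<Prod>i\<in>J. x i))"
  proof (rule sum.cong[OF refl])
    fix J assume "J \<in> ?B"
    hence "finite J" "Suc N \<notin> J" using finite_subset by auto
    thus "(\<Prod>i\<in>insert (Suc N) J. x i) = x (Suc N) * (\<Prod>i\<in>J. x i)" by simp
  qed
  finally show ?thesis by (simp add: T_def sum_distrib_left)
qed

lemma T_E: "T x N j = E x N j"
  by (induction x N j rule: E.induct) (simp_all add: T_0 T_0S T_SS)

lemma S_E: "S x N j = E x N j / real (N choose j)"
  using T_E[of x N j] by (simp add: S_def T_def)

lemma E_nonneg: "(\<And>i. x i \<ge> 0) \<Longrightarrow> E x N j \<ge> 0"
  by (induction x N j rule: E.induct) auto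

lemma E_zero: "N < j \<Longrightarrow> E x N j = 0"
  by (induction x N j rule: E.induct) auto

lemma E_pos: "(\<And>i. x i > 0) \<Longrightarrow> j \<le> N \<Longrightarrow> E x N j > 0"
proof (induction x N j rule: E.induct)
  case (3 x N j)
  have "E x N (Suc j) \<ge> 0" using 3 E_nonneg[of x] less_imp_le by blast
  moreover have "x (Suc N) * E x N j > 0" using 3 by auto
  ultimately show ?case by simp
qed auto

lemma E_up:
  assumes "\<And>i. 0 \<le> x i" "\<And>i. x i \<le> M"
  shows "real (Suc j) * E x N (Suc j) \<le> (real N - real j) * M * E x N j"
proof (induction N arbitrary: j)
  case 0
  then show ?case by (cases j) auto
next
  case (Suc N)
  have M0: "M \<ge> 0" using assms(1)[of 0] assms(2)[of 0] by linarith
  show ?case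
  proof (cases j)
    case 0
    have "real 1 * E x N 1 \<le> (real N - 0) * M * E x N 0" using Suc.IH[of 0] by simp
    then show ?thesis using 0 assms(2)[of "Suc N"] by (simp add: algebra_simps)
  next
    case (Suc j')
    have ih1: "real (Suc (Suc j')) * E x N (Suc (Suc j')) \<le> (real N - real (Suc j')) * M * E x N (Suc j')"
      using Suc.IH .
    have ih2: "real (Suc j') * E x N (Suc j') \<le> (real N - real j') * M * E x N j'"
      using Suc.IH .
    have xp: "x (Suc N) \<ge> 0" "x (Suc N) \<le> M" using assms by auto
    have e0: "E x N (Suc j') \<ge> 0" "E x N j' \<ge> 0" using E_nonneg assms(1) by auto
    have a: "x (Suc N) * (real (Suc j') * E x N (Suc j')) \<le> x (Suc N) * ((real N - real j') * M * E x N j')"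
      using ih2 xp by (intro mult_left_mono) auto
    have b: "x (Suc N) * E x N (Suc j') \<le> M * E x N (Suc j')"
      using xp e0 by (simp add: mult_right_mono)
    have "real (Suc (Suc j')) * E x (Suc N) (Suc (Suc j'))
        = real (Suc (Suc j')) * E x N (Suc (Suc j')) + x (Suc N) * E x N (Suc j')
          + x (Suc N) * (real (Suc j') * E x N (Suc j'))"
      by (simp add: algebra_simps)
    also have "\<dots> \<le> (real N - real (Suc j')) * M * E x N (Suc j') + M * E x N (Suc j')
          + x (Suc N) * ((real N - real j') * M * E x N j')"
      using ih1 a b by linarith
    also have "\<dots> = (real (Suc N) - real (Suc j')) * M * E x (Suc N) (Suc j')"
      by (simp add: algebra_simps)
    finally show ?thesis using Suc by simp
  qed
qed

lemma E_lo:
  assumes "\<And>i. 0 \<le> x i" "\<And>i. m \<le> x i"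
  shows "real (Suc j) * E x N (Suc j) \<ge> (real N - real j) * m * E x N j"
proof (induction N arbitrary: j)
  case 0
  then show ?case
    using assms(2)[of 0] by (cases j) (auto simp: mult_nonneg_nonneg mult_nonpos_nonneg)
next
  case (Suc N)
  show ?case
  proof (cases j)
    case 0
    have "real 1 * E x N 1 \<ge> (real N - 0) * m * E x N 0" using Suc.IH[of 0] by simp
    then show ?thesis using 0 assms(2)[of "Suc N"] by (simp add: algebra_simps)
  next
    case (Suc j')
    have ih1: "real (Suc (Suc j')) * E x N (Suc (Suc j')) \<ge> (real N - real (Suc j')) * m * E x N (Suc j')"
      using Suc.IH .
    have ih2: "real (Suc j') * E x N (Suc j') \<ge> (real N - real j') * m * E x N j'"
      using Suc.IH .
    have xp: "x (Suc N) \<ge> 0" "x (Suc N) \<ge> m" using assms by auto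
    have e0: "E x N (Suc j') \<ge> 0" "E x N j' \<ge> 0" using E_nonneg assms(1) by auto
    have a: "x (Suc N) * (real (Suc j') * E x N (Suc j')) \<ge> x (Suc N) * ((real N - real j') * m * E x N j')"
      using ih2 xp by (intro mult_left_mono) auto
    have b: "x (Suc N) * E x N (Suc j') \<ge> m * E x N (Suc j')"
      using xp e0 by (simp add: mult_right_mono)
    have "real (Suc (Suc j')) * E x (Suc N) (Suc (Suc j'))
        = real (Suc (Suc j')) * E x N (Suc (Suc j')) + x (Suc N) * E x N (Suc j')
          + x (Suc N) * (real (Suc j') * E x N (Suc j'))"
      by (simp add: algebra_simps)
    also have "\<dots> \<ge> (real N - real (Suc j')) * m * E x N (Suc j') + m * E x N (Suc j')
          + x (Suc N) * ((real N - real j') * m * E x N j')"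
      using ih1 a b by linarith
    also have "(real N - real (Suc j')) * m * E x N (Suc j') + m * E x N (Suc j')
          + x (Suc N) * ((real N - real j') * m * E x N j') = (real (Suc N) - real (Suc j')) * m * E x (Suc N) (Suc j')"
      by (simp add: algebra_simps)
    finally show ?thesis using Suc by simp
  qed
qed

lemma binom_rel: "real (Suc j) * real (N choose Suc j) = (real N - real j) * real (N choose j)"
proof (cases "j \<le> N")
  case True
  have "Suc j * (N choose Suc j) = (N - j) * (N choose j)"
    using binomial_absorption[of j N] binomial_absorb_comp[of N j] by simp
  hence "real (Suc j * (N choose Suc j)) = real ((N - j) * (N choose j))" by simp
  thus ?thesis using True by (simp add: of_nat_diff algebra_simps)
next
  case False thus ?thesis by (simp add: binomial_eq_0)
qed

locale bnd =
  fixes x :: "nat \<Rightarrow> real" and mu M :: real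
  assumes mu: "0 < mu" and lo: "\<And>i. mu \<le> x i" and hi: "\<And>i. x i \<le> M"
begin

lemma xpos: "x i > 0" using mu lo[of i] by linarith
lemma xnn: "x i \<ge> 0" using xpos[of i] by linarith
lemma muM: "mu \<le> M" using lo[of 0] hi[of 0] by linarith

lemma S_pos: "j \<le> N \<Longrightarrow> S x N j > 0"
  using E_pos[of x j N] xpos by (simp add: S_E)

lemma S1:
  assumes "j < N"
  shows "mu * S x N j \<le> S x N (Suc j)" "S x N (Suc j) \<le> M * S x N j"
proof -
  define c1 where "c1 = real (N choose Suc j)"
  define c0 where "c0 = real (N choose j)"
  have c1p: "c1 > 0" and c0p: "c0 > 0" using assms by (auto simp: c1_def c0_def)
  have rel: "real (Suc j) * c1 = (real N - real j) * c0" unfolding c1_def c0_def by (rule binom_rel)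
  have Nj: "real N - real j > 0" using assms by simp
  have up: "real (Suc j) * E x N (Suc j) \<le> (real N - real j) * M * E x N j"
    by (rule E_up[OF xnn hi])
  have low: "real (Suc j) * E x N (Suc j) \<ge> (real N - real j) * mu * E x N j"
    by (rule E_lo[OF xnn lo])
  have eq1: "S x N (Suc j) = real (Suc j) * E x N (Suc j) / ((real N - real j) * c0)"
    using c1p by (simp add: S_E c1_def[symmetric] rel[symmetric])
  have eq0: "S x N j = E x N j / c0" by (simp add: S_E c0_def)
  have "real (Suc j) * E x N (Suc j) / ((real N - real j) * c0) \<le> (real N - real j) * M * E x N j / ((real N - real j) * c0)"
    using up Nj c0p by (intro divide_right_mono) auto
  also have "\<dots> = M * S x N j" using Nj c0p by (simp add: eq0 field_simps)
  finally show "S x N (Suc j) \<le> M * S x N j" using eq1 by simp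
  have "real (Suc j) * E x N (Suc j) / ((real N - real j) * c0) \<ge> (real N - real j) * mu * E x N j / ((real N - real j) * c0)"
    using low Nj c0p by (intro divide_right_mono) auto
  moreover have "(real N - real j) * mu * E x N j / ((real N - real j) * c0) = mu * S x N j" using Nj c0p by (simp add: eq0 field_simps)
  ultimately show "mu * S x N j \<le> S x N (Suc j)" using eq1 by simp
qed

lemma S2:
  assumes "1 \<le> j" "j \<le> N"
  shows "S x (Suc N) j \<le> (M / mu) * S x N j" "(mu / M) * S x N j \<le> S x (Suc N) j"
proof -
  obtain j' where j: "j = Suc j'" using assms(1) by (cases j) auto
  have jN: "j' < N" using assms j by simp
  define c1 where "c1 = real (N choose Suc j')"
  define c0 where "c0 = real (N choose j')"
  have c1p: "c1 > 0" and c0p: "c0 > 0" using jN by (auto simp: c1_def c0_def)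
  define s1 where "s1 = S x N (Suc j')"
  define s0 where "s0 = S x N j'"
  have s1p: "s1 > 0" using S_pos jN by (simp add: s1_def)
  have s0p: "s0 > 0" using S_pos jN by (simp add: s0_def)
  have E1: "E x N (Suc j') = s1 * c1" using c1p by (simp add: s1_def c1_def S_E)
  have E0: "E x N j' = s0 * c0" using c0p by (simp add: s0_def c0_def S_E)
  have r1: "mu * s0 \<le> s1" "s1 \<le> M * s0" using S1[OF jN] by (auto simp: s0_def s1_def)
  have Mp: "M > 0" using muM mu by linarith
  have SS: "S x (Suc N) j = (s1 * c1 + x (Suc N) * (s0 * c0)) / (c0 + c1)"
    by (simp add: j S_E E1 E0 c0_def c1_def)
  have q1: "M / mu \<ge> 1" using muM mu by simp
  have q2: "mu / M \<le> 1" using muM mu by simp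
  have "x (Suc N) * s0 \<le> M * s0" using hi s0p by (simp add: mult_right_mono)
  also have "M * s0 \<le> (M / mu) * s1"
    using r1 mu Mp by (simp add: field_simps)
  finally have a: "x (Suc N) * s0 \<le> (M / mu) * s1" .
  have b: "s1 \<le> (M / mu) * s1" using mult_right_mono[OF q1, of s1] s1p by simp
  have "s1 * c1 + x (Suc N) * (s0 * c0) \<le> (M / mu) * s1 * c1 + (M / mu) * s1 * c0"
    using mult_right_mono[OF a, of c0] mult_right_mono[OF b, of c1] c0p c1p
    by (simp add: algebra_simps)
  hence "s1 * c1 + x (Suc N) * (s0 * c0) \<le> (M / mu) * s1 * (c0 + c1)"
    by (simp add: distrib_left)
  hence "S x (Suc N) j \<le> ((M / mu) * s1 * (c0 + c1)) / (c0 + c1)"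
    unfolding SS using c0p c1p by (intro divide_right_mono) auto
  thus "S x (Suc N) j \<le> (M / mu) * S x N j" using c0p c1p by (simp add: j s1_def)
  have "x (Suc N) * s0 \<ge> mu * s0" using lo s0p by (simp add: mult_right_mono)
  moreover have "mu * s0 \<ge> (mu / M) * s1"
    using r1 mu Mp by (simp add: field_simps)
  ultimately have a: "x (Suc N) * s0 \<ge> (mu / M) * s1" by linarith
  have b: "s1 \<ge> (mu / M) * s1" using mult_right_mono[OF q2, of s1] s1p by simp
  have "s1 * c1 + x (Suc N) * (s0 * c0) \<ge> (mu / M) * s1 * c1 + (mu / M) * s1 * c0"
    using mult_right_mono[OF a, of c0] mult_right_mono[OF b, of c1] c0p c1p
    by (simp add: algebra_simps)
  hence "s1 * c1 + x (Suc N) * (s0 * c0) \<ge> (mu / M) * s1 * (c0 + c1)"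
    by (simp add: distrib_left)
  hence "S x (Suc N) j \<ge> ((mu / M) * s1 * (c0 + c1)) / (c0 + c1)"
    unfolding SS using c0p c1p by (intro divide_right_mono) auto
  thus "(mu / M) * S x N j \<le> S x (Suc N) j" using c0p c1p by (simp add: j s1_def)
qed

definition B where "B = 2 * (\<bar>ln mu\<bar> + \<bar>ln M\<bar>)"

lemma Mpos: "M > 0" using mu muM by linarith

lemma G1: assumes "j < N" shows "\<bar>ln (S x N (Suc j)) - ln (S x N j)\<bar> \<le> B"
proof -
  have p0: "S x N j > 0" and p1: "S x N (Suc j) > 0" using S_pos assms by auto
  have "ln (S x N (Suc j)) \<le> ln (M * S x N j)" using S1(2)[OF assms] p1 by simp
  also have "\<dots> = ln M + ln (S x N j)" using Mpos p0 by (simp add: ln_mult)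
  finally have a: "ln (S x N (Suc j)) \<le> ln M + ln (S x N j)" .
  have "ln (mu * S x N j) \<le> ln (S x N (Suc j))" using S1(1)[OF assms] mu p0 p1 by (subst ln_le_cancel_iff) (auto intro: mult_pos_pos)
  moreover have "ln (mu * S x N j) = ln mu + ln (S x N j)" using mu p0 by (simp add: ln_mult)
  ultimately have b: "ln mu + ln (S x N j) \<le> ln (S x N (Suc j))" by simp
  show ?thesis using a b abs_ge_self[of "ln mu"] abs_ge_minus_self[of "ln mu"] abs_ge_self[of "ln M"] abs_ge_minus_self[of "ln M"] unfolding B_def abs_le_iff by (smt (verit))
qed

lemma G2: assumes "1 \<le> j" "j \<le> N" shows "\<bar>ln (S x (Suc N) j) - ln (S x N j)\<bar> \<le> B"
proof -
  have p0: "S x N j > 0" and p1: "S x (Suc N) j > 0" using S_pos assms by auto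
  have "ln (S x (Suc N) j) \<le> ln ((M / mu) * S x N j)" using S2(1)[OF assms] p1 by simp
  also have "\<dots> = ln M - ln mu + ln (S x N j)" using Mpos mu p0 by (simp add: ln_mult ln_div)
  finally have a: "ln (S x (Suc N) j) \<le> ln M - ln mu + ln (S x N j)" .
  have "ln ((mu / M) * S x N j) \<le> ln (S x (Suc N) j)" using S2(2)[OF assms] mu Mpos p0 p1 by (subst ln_le_cancel_iff) (auto intro: mult_pos_pos)
  moreover have "ln ((mu / M) * S x N j) = ln mu - ln M + ln (S x N j)" using Mpos mu p0 by (simp add: ln_mult ln_div)
  ultimately have b: "ln mu - ln M + ln (S x N j) \<le> ln (S x (Suc N) j)" by simp
  show ?thesis using a b abs_ge_self[of "ln mu"] abs_ge_minus_self[of "ln mu"] abs_ge_self[of "ln M"] abs_ge_minus_self[of "ln M"] unfolding B_def abs_le_iff by (smt (verit))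
qed

lemma G0: "ln (S x N 0) = 0" by (simp add: S_E)

lemma G3: "j \<le> N \<Longrightarrow> \<bar>ln (S x N j)\<bar> \<le> real j * B"
proof (induction j)
  case 0 thus ?case by (simp add: G0)
next
  case (Suc j)
  have "\<bar>ln (S x N (Suc j)) - ln (S x N j)\<bar> \<le> B" using G1 Suc.prems by simp
  thus ?case using Suc by (simp add: algebra_simps)
qed

lemma GA: "1 \<le> j \<Longrightarrow> j \<le> N \<Longrightarrow> \<bar>ln (S x (N + d) j) - ln (S x N j)\<bar> \<le> real d * B"
proof (induction d)
  case 0 thus ?case by simp
next
  case (Suc d)
  have "\<bar>ln (S x (Suc (N + d)) j) - ln (S x (N + d) j)\<bar> \<le> B" using G2 Suc.prems by simp
  thus ?case using Suc by (simp add: algebra_simps)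
qed

lemma GB: "j + d \<le> N \<Longrightarrow> \<bar>ln (S x N (j + d)) - ln (S x N j)\<bar> \<le> real d * B"
proof (induction d)
  case 0 thus ?case by simp
next
  case (Suc d)
  have "\<bar>ln (S x N (Suc (j + d))) - ln (S x N (j + d))\<bar> \<le> B" using G1 Suc.prems by simp
  thus ?case using Suc by (simp add: algebra_simps)
qed

end


lemma quot_bound:
  fixes a b p q C Bc D0 :: real
  assumes "0 < q" "q \<le> p" "\<bar>a - b\<bar> \<le> C" "\<bar>b\<bar> \<le> q * Bc" "p - q \<le> D0" "0 \<le> Bc"
  shows "\<bar>a / p - b / q\<bar> \<le> (C + Bc * D0) / p"
proof -
  have p: "p > 0" using assms by linarith
  have eq: "a / p - b / q = (a - b) / p + b * (q - p) / (p * q)" using p assms(1) by (simp add: field_simps)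
  have "\<bar>b * (q - p)\<bar> \<le> (q * Bc) * D0"
    unfolding abs_mult using assms by (intro mult_mono) auto
  moreover have "\<bar>b * (q - p) / (p * q)\<bar> = \<bar>b * (q - p)\<bar> / (p * q)"
    using p assms(1) by (simp add: abs_divide)
  ultimately have "\<bar>b * (q - p) / (p * q)\<bar> \<le> (q * Bc) * D0 / (p * q)"
    using p assms(1) by (simp only:) (rule divide_right_mono, auto)
  also have "\<dots> = Bc * D0 / p" using p assms(1) by (simp add: field_simps)
  finally have t2: "\<bar>b * (q - p) / (p * q)\<bar> \<le> Bc * D0 / p" .
  have t1: "\<bar>(a - b) / p\<bar> \<le> C / p" using assms(3) p by (simp add: abs_divide divide_right_mono)
  have "\<bar>a / p - b / q\<bar> \<le> \<bar>(a - b) / p\<bar> + \<bar>b * (q - p) / (p * q)\<bar>" unfolding eq by (rule abs_triangle_ineq)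
  also have "\<dots> \<le> C / p + Bc * D0 / p" using t1 t2 by linarith
  finally show ?thesis by (simp add: add_divide_distrib)
qed

lemma periodic:
  fixes x :: "nat \<Rightarrow> real" and L :: nat
  assumes "\<And>i. x (i + L) = x i"
  shows "x i = x (i mod L)"
proof -
  have "x (a + q * L) = x a" for a q :: nat
  proof (induction q)
    case (Suc q)
    have "x (a + Suc q * L) = x ((a + q * L) + L)" by (simp add: algebra_simps)
    also have "\<dots> = x a" using assms Suc by simp
    finally show ?case .
  qed simp
  from this[of "i mod L" "i div L"] show ?thesis by simp
qed

lemma div_filterlim:
  assumes "L \<ge> (1::nat)"
  shows "filterlim (\<lambda>n. n div L) at_top sequentially"
  unfolding filterlim_at_top eventually_sequentially
proof
  fix Z show "\<exists>N. \<forall>n\<ge>N. Z \<le> n div L"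
  proof (intro exI allI impI)
    fix n assume "Z * L \<le> n"
    hence "Z * L div L \<le> n div L" by (rule div_le_mono)
    thus "Z \<le> n div L" using assms by simp
  qed
qed


lemma (in bnd) main_conv:
  assumes L: "L \<ge> 1" and c: "0 < c" "c \<le> 1"
    and conv: "(\<lambda>k. FXk x L k c) \<longlonglongrightarrow> l"
  shows "(\<lambda>n. root (nat \<lceil>c * real n\<rceil>) (S x n (nat \<lceil>c * real n\<rceil>))) \<longlonglongrightarrow> l"
proof -
  define m where "m n = nat \<lceil>c * real n\<rceil>" for n
  define N0 where "N0 n = n div L * L" for n
  define m0 where "m0 n = nat \<lceil>c * real (N0 n)\<rceil>" for n
  define K where "K = ((2 * real L + 1) * B + B * (real L + 1)) / c"
  have B0: "B \<ge> 0" unfolding B_def by simp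
  have facts: "1 \<le> m0 n \<and> m0 n \<le> N0 n \<and> m0 n \<le> m n \<and> m n \<le> n \<and> N0 n \<le> n
     \<and> real n < real (N0 n) + real L \<and> c * real n \<le> real (m n)
     \<and> real (m n) - real (m0 n) \<le> real L + 1" if n: "n \<ge> L" for n
  proof -
    have dm: "n = N0 n + n mod L" unfolding N0_def by simp
    have ml: "n mod L < L" using L by simp
    have N0n: "N0 n \<le> n" using dm by linarith
    have N0L: "n < N0 n + L" using dm ml by linarith
    have kpos: "n div L \<ge> 1" using n L div_le_mono[of L n L] by simp
    hence N01: "N0 n \<ge> 1" unfolding N0_def using L by (simp add: one_le_mult_iff)
    have cN: "c * real (N0 n) > 0" using c N01 by simp
    have ceil0: "real_of_int \<lceil>c * real (N0 n)\<rceil> \<ge> c * real (N0 n)" by simp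
    have ceiln: "real_of_int \<lceil>c * real n\<rceil> \<ge> c * real n" by simp
    have ceil0u: "real_of_int \<lceil>c * real (N0 n)\<rceil> < c * real (N0 n) + 1" using ceiling_correct[of "c * real (N0 n)"] by linarith
    have ceilnu: "real_of_int \<lceil>c * real n\<rceil> < c * real n + 1" using ceiling_correct[of "c * real n"] by linarith
    have pos0: "\<lceil>c * real (N0 n)\<rceil> \<ge> 1" using cN by (simp add: one_le_ceiling) 
    have "real n \<ge> 1" using N01 N0n by simp
    hence posn: "\<lceil>c * real n\<rceil> \<ge> 1" using c by (simp add: one_le_ceiling)
    have rm0: "real (m0 n) = real_of_int \<lceil>c * real (N0 n)\<rceil>" unfolding m0_def using pos0 by simp
    have rm: "real (m n) = real_of_int \<lceil>c * real n\<rceil>" unfolding m_def using posn by simp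
    have le0: "\<lceil>c * real (N0 n)\<rceil> \<le> int (N0 n)" unfolding ceiling_le_iff using c by (simp add: mult_left_le_one_le)
    have len: "\<lceil>c * real n\<rceil> \<le> int n" unfolding ceiling_le_iff using c by (simp add: mult_left_le_one_le)
    have mono: "\<lceil>c * real (N0 n)\<rceil> \<le> \<lceil>c * real n\<rceil>" using c N0n by (intro ceiling_mono) (simp add: mult_left_mono)
    have "real (m n) - real (m0 n) \<le> c * (real n - real (N0 n)) + 1"
      using rm rm0 ceilnu ceil0 by (simp add: algebra_simps del: le_of_int_ceiling)
    also have "\<dots> \<le> real L + 1"
    proof -
      have "real n - real (N0 n) \<ge> 0" using N0n by simp
      hence "c * (real n - real (N0 n)) \<le> real n - real (N0 n)" using c by (simp add: mult_left_le_one_le)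
      also have "\<dots> \<le> real L" using N0L by simp
      finally show ?thesis by simp
    qed
    finally have d: "real (m n) - real (m0 n) \<le> real L + 1" .
    have cn0: "c * real n > 0" using c N01 N0n by simp
    show ?thesis using d rm rm0 ceiln pos0 posn cn0 le0 len mono N0n N0L
      by (auto simp: m_def m0_def nat_le_iff le_nat_iff)
  qed
  have filt: "filterlim (\<lambda>n. n div L) at_top sequentially" by (rule div_filterlim[OF L])
  have hconv: "(\<lambda>n. FXk x L (n div L) c) \<longlonglongrightarrow> l"
    by (rule filterlim_compose[OF conv filt])
  have heq: "ln (FXk x L (n div L) c) = ln (S x (N0 n) (m0 n)) / real (m0 n)" if "n \<ge> L" for n
  proof -
    have "FXk x L (n div L) c = root (m0 n) (S x (N0 n) (m0 n))"
      using c unfolding FXk_def m0_def N0_def by simp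
    thus ?thesis using facts[OF that] by (simp add: ln_root)
  qed
  have hpos: "FXk x L (n div L) c > 0" if "n \<ge> L" for n
  proof -
    have "FXk x L (n div L) c = root (m0 n) (S x (N0 n) (m0 n))"
      using c unfolding FXk_def m0_def N0_def by simp
    thus ?thesis using facts[OF that] S_pos by simp
  qed
  have hlow: "FXk x L (n div L) c \<ge> exp (- B)" if "n \<ge> L" for n
  proof -
    have f: "1 \<le> m0 n" "m0 n \<le> N0 n" using facts[OF that] by auto
    have "\<bar>ln (S x (N0 n) (m0 n))\<bar> \<le> real (m0 n) * B" using G3 f by simp
    hence "ln (S x (N0 n) (m0 n)) / real (m0 n) \<ge> - B" using f by (simp add: field_simps abs_le_iff)
    hence "ln (FXk x L (n div L) c) \<ge> - B" using heq[OF that] by simp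
    hence "exp (ln (FXk x L (n div L) c)) \<ge> exp (- B)" by simp
    thus ?thesis using hpos[OF that] by simp
  qed
  have lpos: "l > 0"
  proof -
    have "exp (- B) \<le> l" by (rule LIMSEQ_le_const[OF hconv]) (use hlow in blast)
    thus ?thesis using exp_gt_zero[of "-B"] by linarith
  qed
  have lnh: "(\<lambda>n. ln (FXk x L (n div L) c)) \<longlonglongrightarrow> ln l"
    using hconv lpos by (intro tendsto_ln) auto
  define D where "D n = ln (S x n (m n)) / real (m n) - ln (S x (N0 n) (m0 n)) / real (m0 n)" for n
  have Dbound: "\<bar>D n\<bar> \<le> K / real n" if "n \<ge> L" for n
  proof -
    note f = facts[OF that]
    have npos: "real n > 0" using that L by simp
    have t1: "\<bar>ln (S x n (m0 n + (m n - m0 n))) - ln (S x n (m0 n))\<bar> \<le> real (m n - m0 n) * B"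
      by (rule GB) (use f in auto)
    have t2: "\<bar>ln (S x (N0 n + (n - N0 n)) (m0 n)) - ln (S x (N0 n) (m0 n))\<bar> \<le> real (n - N0 n) * B"
      by (rule GA) (use f in auto)
    have e1: "m0 n + (m n - m0 n) = m n" "N0 n + (n - N0 n) = n" using f by auto
    have r1: "real (m n - m0 n) \<le> real L + 1" using f by (simp add: of_nat_diff)
    have r2: "real (n - N0 n) \<le> real L" using f by (simp add: of_nat_diff)
    have "\<bar>ln (S x n (m n)) - ln (S x (N0 n) (m0 n))\<bar> \<le> real (m n - m0 n) * B + real (n - N0 n) * B"
      using t1 t2 unfolding e1 by linarith
    also have "\<dots> \<le> (real L + 1) * B + real L * B"
      using r1 r2 B0 by (intro add_mono mult_right_mono) auto
    finally have C: "\<bar>ln (S x n (m n)) - ln (S x (N0 n) (m0 n))\<bar> \<le> (2 * real L + 1) * B" by (simp add: algebra_simps)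
    have b: "\<bar>ln (S x (N0 n) (m0 n))\<bar> \<le> real (m0 n) * B" using G3 f by simp
    have "\<bar>D n\<bar> \<le> ((2 * real L + 1) * B + B * (real L + 1)) / real (m n)"
      unfolding D_def by (rule quot_bound) (use f C b B0 in auto)
    also have "\<dots> \<le> ((2 * real L + 1) * B + B * (real L + 1)) / (c * real n)"
      using f npos c B0 by (intro divide_left_mono) auto
    also have "\<dots> = K / real n" unfolding K_def using c npos by (simp add: field_simps)
    finally show ?thesis .
  qed
  have D0: "D \<longlonglongrightarrow> 0"
  proof (rule Lim_null_comparison)
    show "\<forall>\<^sub>F n in sequentially. norm (D n) \<le> K / real n"
      unfolding eventually_sequentially using Dbound by auto
    show "(\<lambda>n. K / real n) \<longlonglongrightarrow> 0" by (rule lim_const_over_n)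
  qed
  have g: "(\<lambda>n. D n + ln (FXk x L (n div L) c)) \<longlonglongrightarrow> 0 + ln l"
    by (intro tendsto_add D0 lnh)
  have g2: "(\<lambda>n. exp (D n + ln (FXk x L (n div L) c))) \<longlonglongrightarrow> exp (0 + ln l)"
    by (intro tendsto_exp g)
  show ?thesis
  proof (rule Lim_transform_eventually)
    show "(\<lambda>n. exp (D n + ln (FXk x L (n div L) c))) \<longlonglongrightarrow> l" using g2 lpos by simp
    show "\<forall>\<^sub>F n in sequentially. exp (D n + ln (FXk x L (n div L) c)) = root (nat \<lceil>c * real n\<rceil>) (S x n (nat \<lceil>c * real n\<rceil>))"
      unfolding eventually_sequentially
    proof (intro exI allI impI)
      fix n assume n: "n \<ge> L"
      note f = facts[OF n]
      have Sp: "S x n (m n) > 0" using S_pos f by simp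
      have "D n + ln (FXk x L (n div L) c) = ln (S x n (m n)) / real (m n)"
        using heq[OF n] by (simp add: D_def)
      also have "\<dots> = ln (root (m n) (S x n (m n)))" using f by (simp add: ln_root)
      finally have "exp (D n + ln (FXk x L (n div L) c)) = exp (ln (root (m n) (S x n (m n))))" by simp
      also have "\<dots> = root (m n) (S x n (m n))" using Sp f by simp
      finally show "exp (D n + ln (FXk x L (n div L) c)) = root (nat \<lceil>c * real n\<rceil>) (S x n (nat \<lceil>c * real n\<rceil>))"
        by (simp add: m_def)
    qed
  qed
qed


theorem lemma4p4:
  fixes x :: "nat \<Rightarrow> real" and L :: nat
  assumes "L \<ge> 1"
    and "\<And>i. x i > 0"
    and "\<And>i. x (i + L) = x i"
    and "\<forall>c\<in>{0..1}. \<exists>l. (\<lambda>k. FXk x L k c) \<longlonglongrightarrow> l"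
    and "continuous_on {0..1} (\<lambda>c. lim (\<lambda>k. FXk x L k c))"
  shows "\<forall>c\<in>{0<..1}. (\<lambda>n. root (nat \<lceil>c * real n\<rceil>) (S x n (nat \<lceil>c * real n\<rceil>)))
           \<longlonglongrightarrow> lim (\<lambda>k. FXk x L k c)"
proof
  fix c :: real assume c: "c \<in> {0<..1}"
  define A where "A = x ` {..<L}"
  have fA: "finite A" and neA: "A \<noteq> {}" using assms(1) unfolding A_def by (auto simp: lessThan_empty_iff)
  have mem: "x i \<in> A" for i
    using periodic[of x L i, OF assms(3)] assms(1) unfolding A_def by auto
  interpret bnd x "Min A" "Max A"
  proof
    show "0 < Min A" using Min_in[OF fA neA] assms(2) unfolding A_def by auto
    show "Min A \<le> x i" for i using mem fA by simp
    show "x i \<le> Max A" for i using mem fA by simp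
  qed
  obtain l where l: "(\<lambda>k. FXk x L k c) \<longlonglongrightarrow> l" using assms(4) c by (meson atLeastAtMost_iff greaterThanAtMost_iff less_imp_le)
  have "lim (\<lambda>k. FXk x L k c) = l" using l by (rule limI)
  thus "(\<lambda>n. root (nat \<lceil>c * real n\<rceil>) (S x n (nat \<lceil>c * real n\<rceil>))) \<longlonglongrightarrow> lim (\<lambda>k. FXk x L k c)"
    using main_conv[OF assms(1) _ _ l] c by simp
qed

end
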